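(* In the setting of the context, for all $u$ with $u_\infty<u\le u_0$, \[ \beta N-\beta\tilde S e^{(\beta/\gamma)\tilde R}u+\gamma\log u>\psi(u)>0 \] and \[ \beta N-\beta\tilde S e^{(\beta/\gamma)\tilde R}u+\gamma\log u>\beta\Bigl(\tilde E e^{-\delta\varphi(u)}+\tilde S e^{(\beta/\gamma)\tilde R}e^{-\delta\varphi(u)}\int_u^{u_0}e^{\delta\varphi(v)}dv\Bigr)>0 . \]
   Context: Let $\beta,\gamma,\delta>0$ be constants and $\tilde S,\tilde E,\tilde I,\tilde R$ real numbers with $N:=\tilde S+\tilde E+\tilde I+\tilde R>0$. Standing assumptions: (A1) $\tilde I>0$; (A2) $\tilde E>(\gamma/\delta)\tilde I$; (A3) $\tilde S>\delta\tilde E/(\beta\tilde I)$; (A4) $\tilde R\ge 0$ and $N>\tilde S e^{(\beta/\gamma)\tilde R}+\tilde R$. Let $\alpha$ be the unique solution in $(\tilde R,N)$ of $x=N-\tilde S e^{(\beta/\gamma)\tilde R}e^{-(\beta/\gamma)x}$, and assume (A5) $\tilde S<(\gamma/\beta)e^{(\beta/\gamma)(\alpha-\tilde R)}$. Put $u_0:=e^{-(\beta/\gamma)\tilde R}$, $u_\infty:=e^{-(\beta/\gamma)\alpha}$. Let $\psi$ be the unique function, continuous and positive on $(u_\infty,u_0]$ and $C^1$ on $(u_\infty,u_0)$, satisfying $\psi'(u)\psi(u)-\frac{\gamma+\delta}{u}\psi(u)=-\delta\,\frac{\beta N-\beta\tilde S e^{(\beta/\gamma)\tilde R}u+\gamma\log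 u}{u}$ on $(u_\infty,u_0)$ and $\psi(u_0)=\beta\tilde I$. Let $\varphi(u):=\int_u^{u_0}\frac{d\xi}{\xi\psi(\xi)}$ for $u\in(u_\infty,u_0]$. *)

theory Defs
  imports "HOL-Analysis.Analysis"
begin

definition seir_phi :: "(real \<Rightarrow> real) \<Rightarrow> real \<Rightarrow> real \<Rightarrow> real" where
  "seir_phi \<psi> u0 u = integral {u..u0} (\<lambda>\<xi>. 1 / (\<xi> * \<psi> \<xi>))"

end

theory Submission
  imports Defs
begin

theorem proposition1:
  fixes \<beta> \<gamma> \<delta> S E I R N \<alpha> u0 uinf :: real
    and \<psi> \<psi>' :: "real \<Rightarrow> real"
  assumes params: "\<beta> > 0" "\<gamma> > 0" "\<delta> > 0"
    and N_def: "N = S + E + I + R" and N_pos: "N > 0"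
    and A1: "I > 0"
    and A2: "E > (\<gamma> / \<delta>) * I"
    and A3: "S > \<delta> * E / (\<beta> * I)"
    and A4: "R \<ge> 0" "N > S * exp ((\<beta> / \<gamma>) * R) + R"
    and alpha_in: "R < \<alpha>" "\<alpha> < N"
    and alpha_eq: "\<alpha> = N - S * exp ((\<beta> / \<gamma>) * R) * exp (- (\<beta> / \<gamma>) * \<alpha>)"
    and alpha_unique: "\<And>x. R < x \<Longrightarrow> x < N \<Longrightarrow>
                  x = N - S * exp ((\<beta> / \<gamma>) * R) * exp (- (\<beta> / \<gamma>) * x) \<Longrightarrow> x = \<alpha>"
    and A5: "S < (\<gamma> / \<beta>) * exp ((\<beta> / \<gamma>) * (\<alpha> - R))"
    and u0_def: "u0 = exp (- (\<beta> / \<gamma>) * R)"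
    and uinf_def: "uinf = exp (- (\<beta> / \<gamma>) * \<alpha>)"
    and psi_cont: "continuous_on {uinf<..u0} \<psi>"
    and psi_pos: "\<And>u. u \<in> {uinf<..u0} \<Longrightarrow> \<psi> u > 0"
    and psi_deriv: "\<And>u. u \<in> {uinf<..<u0} \<Longrightarrow> (\<psi> has_real_derivative \<psi>' u) (at u)"
    and psi'_cont: "continuous_on {uinf<..<u0} \<psi>'"
    and psi_ode: "\<And>u. u \<in> {uinf<..<u0} \<Longrightarrow>
        \<psi>' u * \<psi> u - (\<gamma> + \<delta>) / u * \<psi> u
          = - \<delta> * (\<beta> * N - \<beta> * S * exp ((\<beta> / \<gamma>) * R) * u + \<gamma> * ln u) / u"
    and psi_init: "\<psi> u0 = \<beta> * I"
  shows "\<forall>u. uinf < u \<and> u \<le> u0 \<longrightarrow>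
           (\<beta> * N - \<beta> * S * exp ((\<beta> / \<gamma>) * R) * u + \<gamma> * ln u > \<psi> u \<and> \<psi> u > 0) \<and>
           (\<beta> * N - \<beta> * S * exp ((\<beta> / \<gamma>) * R) * u + \<gamma> * ln u
              > \<beta> * (E * exp (- \<delta> * seir_phi \<psi> u0 u)
                     + S * exp ((\<beta> / \<gamma>) * R) * exp (- \<delta> * seir_phi \<psi> u0 u)
                         * integral {u..u0} (\<lambda>v. exp (\<delta> * seir_phi \<psi> u0 v))) \<and>
            \<beta> * (E * exp (- \<delta> * seir_phi \<psi> u0 u)
                     + S * exp ((\<beta> / \<gamma>) * R) * exp (- \<delta> * seir_phi \<psi> u0 u)
                         * integral {u..u0} (\<lambda>v. exp (\<delta> * seir_phi \<psi> u0 v))) > 0)"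
proof (intro allI impI)
  fix u assume u: "uinf < u \<and> u \<le> u0"
  define K where "K = S * exp ((\<beta> / \<gamma>) * R)"
  define F where "F = (\<lambda>v. \<beta> * N - \<beta> * K * v + \<gamma> * ln v)"
  define g where "g = (\<lambda>\<xi>. 1 / (\<xi> * \<psi> \<xi>))"
  define \<Phi> where "\<Phi> = seir_phi \<psi> u0"
  have Phi_eq: "\<And>v. \<Phi> v = integral {v..u0} g" unfolding \<Phi>_def seir_phi_def g_def by simp
  have uinf_pos: "uinf > 0" using uinf_def by simp
  have sub: "{u..u0} \<subseteq> {uinf<..u0}" using u by auto
  have Epos: "E > 0"
  proof -
    have "(\<gamma> / \<delta>) * I > 0" using params A1 by simp
    then show ?thesis using A2 by linarith
  qed
  have Spos: "S > 0"
  proof -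
    have "\<delta> * E / (\<beta> * I) > 0" using params A1 Epos by simp
    then show ?thesis using A3 by linarith
  qed
  have Kpos: "K > 0" unfolding K_def using Spos by simp
  have psi_cont': "continuous_on {u..u0} \<psi>" using continuous_on_subset[OF psi_cont sub] .
  have g_cont: "continuous_on {u..u0} g"
  proof -
    have nz: "\<forall>x\<in>{u..u0}. x * \<psi> x \<noteq> 0"
    proof
      fix x assume "x \<in> {u..u0}"
      then have "x \<in> {uinf<..u0}" using sub by auto
      then have "x > 0" "\<psi> x > 0" using uinf_pos psi_pos[of x] by auto
      then show "x * \<psi> x \<noteq> 0" by simp
    qed
    have "continuous_on {u..u0} (\<lambda>x. x * \<psi> x)" by (intro continuous_intros psi_cont')
    then show ?thesis unfolding g_def using nz by (intro continuous_on_divide continuous_on_const) auto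
  qed
  have Phi_cont: "continuous_on {u..u0} \<Phi>"
    unfolding Phi_eq[abs_def] by (intro indefinite_integral_continuous_1' integrable_continuous_interval g_cont)
  have Phi_der: "(\<Phi> has_real_derivative - g v) (at v)" if v: "v \<in> {u<..<u0}" for v
  proof -
    have "(\<Phi> has_real_derivative - g v) (at v within {u..u0})"
      unfolding Phi_eq[abs_def] using v by (intro integral_has_real_derivative' g_cont) auto
    moreover have "at v within {u..u0} = at v" using v by (intro at_within_interior) simp
    ultimately show ?thesis by simp
  qed
  define W where "W = (\<lambda>v. exp (\<delta> * \<Phi> v) * (F v - \<psi> v))"
  have F_cont: "continuous_on {u..u0} F" unfolding F_def
    using u uinf_pos by (auto intro!: continuous_intros)
  have W_cont: "continuous_on {u..u0} W" unfolding W_def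
    by (intro continuous_intros Phi_cont F_cont psi_cont')
  have W_der: "(W has_real_derivative (- \<beta> * K * exp (\<delta> * \<Phi> v))) (at v)" if v: "v \<in> {u<..<u0}" for v
  proof -
    have vin: "v \<in> {uinf<..<u0}" using v u by auto
    have vpos: "v > 0" using vin uinf_pos by simp
    have ppos: "\<psi> v > 0" using vin psi_pos by simp
    have Fd: "(F has_real_derivative (- \<beta> * K + \<gamma> / v)) (at v)" unfolding F_def
      using vpos by (auto intro!: derivative_eq_intros)
    have d: "(W has_real_derivative exp (\<delta> * \<Phi> v) * (\<delta> * (- g v)) * (F v - \<psi> v)
               + exp (\<delta> * \<Phi> v) * ((- \<beta> * K + \<gamma> / v) - \<psi>' v)) (at v)"
    proof -
      have e: "((\<lambda>x. exp (\<delta> * \<Phi> x)) has_real_derivative exp (\<delta> * \<Phi> v) * (\<delta> * (- g v))) (at v)"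
        using DERIV_chain2[OF DERIV_exp DERIV_cmult[OF Phi_der[OF v], of \<delta>]] by simp
      have f: "((\<lambda>x. F x - \<psi> x) has_real_derivative ((- \<beta> * K + \<gamma> / v) - \<psi>' v)) (at v)"
        by (intro DERIV_diff Fd psi_deriv[OF vin])
      show ?thesis unfolding W_def using DERIV_mult[OF e f] by (simp add: mult.commute)
    qed
    have ode: "\<psi>' v * \<psi> v - (\<gamma> + \<delta>) / v * \<psi> v = - \<delta> * F v / v"
      using psi_ode[OF vin] unfolding F_def K_def by simp
    have ode2: "v * \<psi>' v * \<psi> v - (\<gamma> + \<delta>) * \<psi> v = - \<delta> * F v"
    proof -
      have e1: "v * (\<psi>' v * \<psi> v - (\<gamma> + \<delta>) / v * \<psi> v) = v * (- \<delta> * F v / v)" using ode by simp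
      have e2: "v * ((\<gamma> + \<delta>) / v * \<psi> v) = (\<gamma> + \<delta>) * \<psi> v" using vpos by simp
      have e3: "v * (- \<delta> * F v / v) = - \<delta> * F v" using vpos by simp
      show ?thesis using e1 e2 e3 by (simp add: right_diff_distrib mult.assoc)
    qed
    have "\<delta> * (- g v) * (F v - \<psi> v) + ((- \<beta> * K + \<gamma> / v) - \<psi>' v) = - \<beta> * K"
    proof -
      have "\<delta> * (- g v) * (F v - \<psi> v) + ((\<gamma> / v) - \<psi>' v)
          = (- \<delta> * (F v - \<psi> v) + \<gamma> * \<psi> v - v * \<psi>' v * \<psi> v) / (v * \<psi> v)"
        unfolding g_def using vpos ppos by (simp add: field_simps)
      also have "\<dots> = 0" using ode2 by (simp add: algebra_simps)
      finally show ?thesis by simp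
    qed
    then have "exp (\<delta> * \<Phi> v) * (\<delta> * (- g v)) * (F v - \<psi> v)
               + exp (\<delta> * \<Phi> v) * ((- \<beta> * K + \<gamma> / v) - \<psi>' v) = - \<beta> * K * exp (\<delta> * \<Phi> v)"
      by (metis (no_types, lifting) distrib_left mult.assoc mult.commute)
    then show ?thesis using d by simp
  qed
  have FTC: "((\<lambda>v. - \<beta> * K * exp (\<delta> * \<Phi> v)) has_integral (W u0 - W u)) {u..u0}"
    using u W_cont W_der
    by (intro fundamental_theorem_of_calculus_interior) (auto simp: has_real_derivative_iff_has_vector_derivative)
  have Phi0: "\<Phi> u0 = 0" unfolding Phi_eq by simp
  have Fu0: "F u0 = \<beta> * (E + I)"
  proof -
    have "K * u0 = S" unfolding K_def u0_def by (simp add: mult.assoc exp_add[symmetric])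
    moreover have "\<gamma> * ln u0 = - \<beta> * R" unfolding u0_def using params by simp
    ultimately show ?thesis unfolding F_def using N_def by (simp add: algebra_simps)
  qed
  have Wu0: "W u0 = \<beta> * E" unfolding W_def using Phi0 Fu0 psi_init by (simp add: algebra_simps)
  have int1: "((\<lambda>v. exp (\<delta> * \<Phi> v)) has_integral (W u - \<beta> * E) / (\<beta> * K)) {u..u0}"
  proof -
    have "((\<lambda>v. (- 1 / (\<beta> * K)) * (- \<beta> * K * exp (\<delta> * \<Phi> v))) has_integral (- 1 / (\<beta> * K)) * (W u0 - W u)) {u..u0}"
      by (intro has_integral_mult_right FTC)
    moreover have "\<And>v. (- 1 / (\<beta> * K)) * (- \<beta> * K * exp (\<delta> * \<Phi> v)) = exp (\<delta> * \<Phi> v)"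
      using params Kpos by (simp add: field_simps)
    moreover have "(- 1 / (\<beta> * K)) * (W u0 - W u) = (W u - \<beta> * E) / (\<beta> * K)"
      using Wu0 params Kpos by (simp add: field_simps)
    ultimately show ?thesis by simp
  qed
  have intv: "integral {u..u0} (\<lambda>v. exp (\<delta> * seir_phi \<psi> u0 v)) = (W u - \<beta> * E) / (\<beta> * K)"
    using int1 unfolding \<Phi>_def by (rule integral_unique)
  have intnn: "integral {u..u0} (\<lambda>v. exp (\<delta> * seir_phi \<psi> u0 v)) \<ge> 0"
    using int1 unfolding \<Phi>_def by (intro integral_nonneg) (auto simp: has_integral_integrable_integral[symmetric] intro: has_integral_integrable)
  define G where "G = \<beta> * (E * exp (- \<delta> * seir_phi \<psi> u0 u)
                     + S * exp ((\<beta> / \<gamma>) * R) * exp (- \<delta> * seir_phi \<psi> u0 u)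
                         * integral {u..u0} (\<lambda>v. exp (\<delta> * seir_phi \<psi> u0 v)))"
  have Gpos: "G > 0" unfolding G_def using params Epos Spos intnn
    by (intro mult_pos_pos add_pos_nonneg mult_nonneg_nonneg) auto
  have "G = \<beta> * exp (- \<delta> * \<Phi> u) * (E + K * ((W u - \<beta> * E) / (\<beta> * K)))"
    unfolding G_def intv \<Phi>_def K_def by (simp add: algebra_simps)
  also have "\<dots> = exp (- \<delta> * \<Phi> u) * W u"
    using params Kpos by (simp add: field_simps)
  also have "\<dots> = F u - \<psi> u" unfolding W_def by (simp add: exp_minus field_simps)
  finally have GF: "G = F u - \<psi> u" .
  have ppos: "\<psi> u > 0" using psi_pos u by auto
  have Fu: "\<beta> * N - \<beta> * S * exp ((\<beta> / \<gamma>) * R) * u + \<gamma> * ln u = F u"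
    unfolding F_def K_def by (simp add: mult.assoc)
  show "(\<beta> * N - \<beta> * S * exp ((\<beta> / \<gamma>) * R) * u + \<gamma> * ln u > \<psi> u \<and> \<psi> u > 0) \<and>
           (\<beta> * N - \<beta> * S * exp ((\<beta> / \<gamma>) * R) * u + \<gamma> * ln u > G \<and> G > 0)"
    unfolding Fu using GF Gpos ppos by linarith
qed

end
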